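(* For integers $0\leq k\leq a<b$, the following identity of rational functions in $q$ holds: $$\frac1{\binom{a+k}{k}_q}-\frac1{\binom{b+k}{k}_q}=\sum_{i=1}^kq^{a+i}\frac{1-q^{b-a}}{1-q^{b+i}}\prod_{j=i}^k\frac{1-q^j}{1-q^{a+j}}\prod_{j=1}^{i-1}\frac{1-q^j}{1-q^{b+j}}.$$
   Context: For nonnegative integers $n$, $[n]!_q=\prod_{j=1}^n\frac{1-q^j}{1-q}$ (with $[0]!_q=1$), and for integers $0\le k\le n$, $\binom{n}{k}_q=\frac{[n]!_q}{[k]!_q[n-k]!_q}$. Empty products equal $1$ and empty sums equal $0$. *)

theory Defs
  imports "HOL-Computational_Algebra.Polynomial" "HOL-Computational_Algebra.Fraction_Field"
begin

definition qfact :: "'a::field \<Rightarrow> nat \<Rightarrow> 'a" where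
  "qfact q n = (\<Prod>j=1..n. (1 - q ^ j) / (1 - q))"

definition qbinom :: "'a::field \<Rightarrow> nat \<Rightarrow> nat \<Rightarrow> 'a" where
  "qbinom q n k = qfact q n / (qfact q k * qfact q (n - k))"

definition qvar :: "rat poly fract" where
  "qvar = Fract [:0, 1:] 1"

end

theory Submission
  imports Defs
begin

lemma qfact_Suc: "qfact q (Suc n) = qfact q n * ((1 - q ^ Suc n) / (1 - q))"
  unfolding qfact_def by (simp add: prod.cl_ivl_Suc mult.commute)

lemma qfact_nz:
  fixes q :: "'a::field"
  assumes nz: "\<And>n. n \<ge> 1 \<Longrightarrow> 1 - q ^ n \<noteq> 0"
  shows "qfact q n \<noteq> 0"
proof -
  have "1 - q \<noteq> 0" using nz[of 1] by simp
  then show ?thesis unfolding qfact_def using nz by (auto simp: prod_zero_iff)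
qed

lemma inv_qbinom:
  fixes q :: "'a::field"
  assumes nz: "\<And>n. n \<ge> 1 \<Longrightarrow> 1 - q ^ n \<noteq> 0"
  shows "1 / qbinom q (a + k) k = (\<Prod>j=1..k. (1 - q ^ j) / (1 - q ^ (a + j)))"
proof (induction k)
  case 0
  then show ?case using qfact_nz[OF nz, of a] by (simp add: qbinom_def qfact_def)
next
  case (Suc k)
  have q1: "1 - q \<noteq> 0" using nz[of 1] by simp
  have n1: "1 - q ^ Suc k \<noteq> 0" by (rule nz) simp
  have n2: "1 - q ^ Suc (a + k) \<noteq> 0" by (rule nz) simp
  have f1: "qfact q k \<noteq> 0" "qfact q a \<noteq> 0" "qfact q (a+k) \<noteq> 0"
    using qfact_nz[OF nz] by auto
  define c where "c = (1 - q ^ Suc k) / (1 - q)"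
  define d where "d = (1 - q ^ Suc (a + k)) / (1 - q)"
  have cd: "c \<noteq> 0" "d \<noteq> 0" using q1 n1 n2 by (auto simp: c_def d_def simp del: power_Suc)
  have e: "a + Suc k = Suc (a + k)" "Suc (a + k) - Suc k = a" "a + k - k = a" by simp_all
  have "qbinom q (a + Suc k) (Suc k) = qfact q (a + k) * d / (qfact q k * c * qfact q a)"
    unfolding qbinom_def e qfact_Suc c_def d_def by simp
  hence "1 / qbinom q (a + Suc k) (Suc k) = (qfact q k * c * qfact q a) / (qfact q (a + k) * d)"
    by simp
  also have "\<dots> = (qfact q k * qfact q a / qfact q (a + k)) * (c / d)"
    by (simp add: times_divide_times_eq mult_ac)
  finally have A1: "1 / qbinom q (a + Suc k) (Suc k) = (qfact q k * qfact q a / qfact q (a + k)) * (c / d)" .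
  have A2: "qfact q k * qfact q a / qfact q (a + k) = 1 / qbinom q (a + k) k"
    unfolding qbinom_def e by simp
  have A3: "c / d = (1 - q ^ Suc k) / (1 - q ^ (a + Suc k))"
    unfolding c_def d_def e using q1 by (simp del: power_Suc)
  have "1 / qbinom q (a + Suc k) (Suc k) = (\<Prod>j=1..k. (1 - q ^ j) / (1 - q ^ (a + j))) * ((1 - q ^ Suc k) / (1 - q ^ (a + Suc k)))"
    unfolding A1 A2 A3 Suc.IH ..
  also have "\<dots> = (\<Prod>j=1..Suc k. (1 - q ^ j) / (1 - q ^ (a + j)))"
    by (simp add: prod.cl_ivl_Suc del: power_Suc)
  finally show ?case .
qed

lemma telescope_gen:
  fixes q :: "'a::field"
  assumes nz: "\<And>n. n \<ge> 1 \<Longrightarrow> 1 - q ^ n \<noteq> 0" and ab: "a < b"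
  shows "(\<Prod>j=1..k. (1 - q ^ j) / (1 - q ^ (a + j))) - (\<Prod>j=1..k. (1 - q ^ j) / (1 - q ^ (b + j))) =
    (\<Sum>i=1..k. q ^ (a + i) * (1 - q ^ (b - a)) / (1 - q ^ (b + i))
       * (\<Prod>j=i..k. (1 - q ^ j) / (1 - q ^ (a + j)))
       * (\<Prod>j=1..i-1. (1 - q ^ j) / (1 - q ^ (b + j))))"
proof -
  define T where "T i = (\<Prod>j=1..i-1. (1 - q ^ j) / (1 - q ^ (b + j))) * (\<Prod>j=i..k. (1 - q ^ j) / (1 - q ^ (a + j)))" for i
  have step: "T i - T (Suc i) = q ^ (a + i) * (1 - q ^ (b - a)) / (1 - q ^ (b + i))
       * (\<Prod>j=i..k. (1 - q ^ j) / (1 - q ^ (a + j)))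
       * (\<Prod>j=1..i-1. (1 - q ^ j) / (1 - q ^ (b + j)))" if i: "1 \<le> i" "i \<le> k" for i
  proof -
    obtain m where m: "i = Suc m" using i by (cases i) auto
    define A where "A = (\<Prod>j=Suc i..k. (1 - q ^ j) / (1 - q ^ (a + j)))"
    define B where "B = (\<Prod>j=1..m. (1 - q ^ j) / (1 - q ^ (b + j)))"
    have pa: "(\<Prod>j=i..k. (1 - q ^ j) / (1 - q ^ (a + j))) = (1 - q ^ i) / (1 - q ^ (a + i)) * A"
      unfolding A_def using i by (simp add: prod.atLeast_Suc_atMost)
    have pb: "(\<Prod>j=1..i. (1 - q ^ j) / (1 - q ^ (b + j))) = B * ((1 - q ^ i) / (1 - q ^ (b + i)))"
      unfolding B_def m by (simp add: prod.cl_ivl_Suc)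
    have na: "1 - q ^ (a + i) \<noteq> 0" and nb: "1 - q ^ (b + i) \<noteq> 0" using nz i by auto
    have qq: "q ^ (b + i) = q ^ (a + i) * q ^ (b - a)" proof -
      have "b + i = (a + i) + (b - a)" using ab by simp
      thus ?thesis by (simp only: power_add)
    qed
    have Bi: "(\<Prod>j=1..i-1. (1 - q ^ j) / (1 - q ^ (b + j))) = B" unfolding B_def m by simp
    have Ti: "T i = B * ((1 - q ^ i) / (1 - q ^ (a + i)) * A)"
      unfolding T_def pa Bi ..
    have TSi: "T (Suc i) = B * ((1 - q ^ i) / (1 - q ^ (b + i))) * A"
      unfolding T_def pb[symmetric] A_def by simp
    have "T i - T (Suc i) = B * A * (1 - q ^ i) * (1 / (1 - q ^ (a + i)) - 1 / (1 - q ^ (b + i)))"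
      unfolding Ti TSi by (simp add: algebra_simps divide_inverse)
    also have "1 / (1 - q ^ (a + i)) - 1 / (1 - q ^ (b + i)) = q ^ (a + i) * (1 - q ^ (b - a)) / ((1 - q ^ (a + i)) * (1 - q ^ (b + i)))"
      using na nb qq by (simp add: field_simps)
    also have "B * A * (1 - q ^ i) * (q ^ (a + i) * (1 - q ^ (b - a)) / ((1 - q ^ (a + i)) * (1 - q ^ (b + i))))
       = q ^ (a + i) * (1 - q ^ (b - a)) / (1 - q ^ (b + i)) * ((1 - q ^ i) / (1 - q ^ (a + i)) * A) * B"
      by (simp add: field_simps)
    also have "B = (\<Prod>j=1..i-1. (1 - q ^ j) / (1 - q ^ (b + j)))" unfolding B_def m by simp
    finally show ?thesis unfolding pa .
  qed
  have tel: "(\<Sum>i=1..n. T i - T (Suc i)) = T 1 - T (Suc n)" for n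
    by (induction n) (auto simp: sum.cl_ivl_Suc)
  have T1: "T 1 = (\<Prod>j=1..k. (1 - q ^ j) / (1 - q ^ (a + j)))" by (simp add: T_def)
  have Tk: "T (Suc k) = (\<Prod>j=1..k. (1 - q ^ j) / (1 - q ^ (b + j)))" by (simp add: T_def)
  have S: "(\<Sum>i=1..k. T i - T (Suc i)) = (\<Sum>i=1..k. q ^ (a + i) * (1 - q ^ (b - a)) / (1 - q ^ (b + i))
       * (\<Prod>j=i..k. (1 - q ^ j) / (1 - q ^ (a + j)))
       * (\<Prod>j=1..i-1. (1 - q ^ j) / (1 - q ^ (b + j))))"
    by (rule sum.cong) (auto simp: step)
  show ?thesis unfolding S[symmetric] tel T1 Tk ..
qed

lemma qvar_nz: "n \<ge> 1 \<Longrightarrow> 1 - qvar ^ n \<noteq> 0"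
proof -
  assume n: "n \<ge> 1"
  have p: "qvar ^ n = Fract (monom 1 n) 1" unfolding qvar_def
    by (induction n) (simp_all add: monom_Suc mult.commute One_fract_def[symmetric])
  have d: "Fract 1 1 - Fract (monom 1 n) 1 = Fract (1 - monom (1::rat) n) 1"
    by (subst diff_fract) simp_all
  have "1 - qvar ^ n = Fract (1 - monom 1 n) 1" unfolding p One_fract_def d ..
  moreover have "(1 - monom (1::rat) n) \<noteq> 0"
  proof
    assume "1 - monom (1::rat) n = 0"
    hence "coeff (1 - monom (1::rat) n) 0 = 0" by simp
    thus False using n by simp
  qed
  ultimately show ?thesis unfolding Zero_fract_def by (simp add: eq_fract)
qed

theorem lemma8:
  fixes k a b :: nat
  assumes "k \<le> a" and "a < b"
  shows "1 / qbinom qvar (a + k) k - 1 / qbinom qvar (b + k) k =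
    (\<Sum>i=1..k. qvar ^ (a + i) * (1 - qvar ^ (b - a)) / (1 - qvar ^ (b + i))
       * (\<Prod>j=i..k. (1 - qvar ^ j) / (1 - qvar ^ (a + j)))
       * (\<Prod>j=1..i-1. (1 - qvar ^ j) / (1 - qvar ^ (b + j))))"
  using telescope_gen[OF qvar_nz assms(2)] inv_qbinom[OF qvar_nz] by simp

end
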